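(* Let $I\subset[0,\infty)$ be an interval, let $a,b\in I^\circ$ with $a<b$, and let $f:I\to\mathbb{R}$ be twice differentiable on $I^\circ$ with $f''\in L^1([a,b])$. Let $q\ge 1$ and assume $|f''|^q$ is $h$-convex on $[a,b]$. Then, writing $M=\big|f''\big(\frac{a+b}{2}\big)\big|^q$, $$\left|\frac{f(a)+f(b)}{2}-\frac{1}{b-a}\int_a^b f(x)\,dx\right|\le \frac{(b-a)^2}{16}\Big(\frac23\Big)^{1-\frac1q}\left[\Big(\int_0^1\big\{(1-t^2)|f''(a)|^q+t(2-t)M\big\}h(t)\,dt\Big)^{1/q}+\Big(\int_0^1\big\{(1-t^2)|f''(b)|^q+t(2-t)M\big\}h(t)\,dt\Big)^{1/q}\right].$$
   Context: Let $J$ be an interval with $(0,1)\subseteq J$ and $h:J\to\mathbb{R}$ a non-negative function, not identically zero, which is Lebesgue integrable on $(0,1)$. A non-negative function $g$ defined on an interval $K$ is called $h$-convex on $K$ if for all $x,y\in K$ and all $t\in(0,1)$: $g(tx+(1-t)y)\le h(t)g(x)+h(1-t)g(y)$. $I^\circ$ denotes the interior of $I$. *)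

theory Defs
  imports "HOL-Analysis.Analysis"
begin

definition h_convex :: "(real \<Rightarrow> real) \<Rightarrow> real set \<Rightarrow> (real \<Rightarrow> real) \<Rightarrow> bool" where
  "h_convex h K g \<longleftrightarrow>
     (\<forall>x\<in>K. 0 \<le> g x) \<and>
     (\<forall>x\<in>K. \<forall>y\<in>K. \<forall>t\<in>{0<..<1}.
        g (t * x + (1 - t) * y) \<le> h t * g x + h (1 - t) * g y)"

end

theory Submission
  imports Defs
begin

lemma pm0:
  fixes K g B :: "real \<Rightarrow> real" and S :: "real set"
  assumes q: "1 \<le> q"
    and K0: "\<forall>x\<in>S. 0 \<le> K x" and g0: "\<forall>x\<in>S. 0 \<le> g x"
    and KgI: "(\<lambda>x. K x * g x) integrable_on S"
    and KI: "(K has_integral \<kappa>) S" and \<kappa>: "0 < \<kappa>"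
    and BI: "(B has_integral \<beta>) S"
    and bound: "\<forall>x\<in>S. K x * g x powr q \<le> B x"
    and bp: "0 < \<beta>'" "\<beta> \<le> \<beta>'"
  shows "integral S (\<lambda>x. K x * g x) \<le> \<kappa> powr (1 - 1/q) * \<beta>' powr (1/q)"
proof -
  define C where "C = \<kappa> powr (1 - 1/q) * \<beta>' powr (1/q)"
  have C0: "C > 0" using \<kappa> bp by (simp add: C_def)
  have pw: "K x * g x \<le> C * ((1/q) * B x / \<beta>' + (1 - 1/q) * K x / \<kappa>)" if x: "x \<in> S" for x
  proof (cases "K x = 0 \<or> g x = 0")
    case True
    have "0 \<le> B x" using bound K0 g0 x by (smt (verit) mult_nonneg_nonneg powr_ge_zero)
    moreover have "0 \<le> 1 - 1/q" using q by (simp add: field_simps)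
    ultimately have "0 \<le> (1/q) * B x / \<beta>' + (1 - 1/q) * K x / \<kappa>"
      using q bp \<kappa> K0 x by (intro add_nonneg_nonneg divide_nonneg_pos mult_nonneg_nonneg) auto
    then have "0 \<le> C * ((1/q) * B x / \<beta>' + (1 - 1/q) * K x / \<kappa>)"
      using C0 by simp
    then show ?thesis using True by auto
  next
    case False
    then have Kp: "K x > 0" and gp: "g x > 0" using K0 g0 x by force+
    have y: "(g x powr q / \<beta>') powr (1/q) * (1/\<kappa>) powr (1 - 1/q)
       \<le> (1/q) * (g x powr q / \<beta>') + (1 - 1/q) * (1/\<kappa>)"
      using q gp bp \<kappa> by (intro Youngs_inequality_0) (auto simp: field_simps)
    have "(g x powr q / \<beta>') powr (1/q) = g x / \<beta>' powr (1/q)"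
      using gp bp q by (simp add: powr_divide powr_powr)
    moreover have "(1/\<kappa>) powr (1 - 1/q) = 1 / \<kappa> powr (1 - 1/q)"
      using \<kappa> by (simp add: powr_divide)
    ultimately have "g x / C \<le> (1/q) * (g x powr q / \<beta>') + (1 - 1/q) * (1/\<kappa>)"
      using y by (simp add: C_def mult.commute)
    then have "g x \<le> C * ((1/q) * (g x powr q / \<beta>') + (1 - 1/q) * (1/\<kappa>))"
      using C0 by (simp add: divide_le_eq mult.commute)
    then have "K x * g x \<le> K x * (C * ((1/q) * (g x powr q / \<beta>') + (1 - 1/q) * (1/\<kappa>)))"
      using Kp by (simp add: mult_left_mono)
    also have "\<dots> = C * ((1/q) * (K x * g x powr q) / \<beta>' + (1 - 1/q) * K x / \<kappa>)"
      by (simp add: field_simps)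
    also have "\<dots> \<le> C * ((1/q) * B x / \<beta>' + (1 - 1/q) * K x / \<kappa>)"
      using bound x C0 q bp by (intro mult_left_mono add_right_mono divide_right_mono) auto
    finally show ?thesis .
  qed
  have RI: "((\<lambda>x. C * ((1/q) * B x / \<beta>' + (1 - 1/q) * K x / \<kappa>)) has_integral
      C * ((1/q) * \<beta> / \<beta>' + (1 - 1/q) * \<kappa> / \<kappa>)) S"
    by (intro has_integral_mult_right has_integral_add has_integral_divide) 
       (auto intro: has_integral_mult_right BI KI)
  have "integral S (\<lambda>x. K x * g x) \<le> C * ((1/q) * \<beta> / \<beta>' + (1 - 1/q) * \<kappa> / \<kappa>)"
    using integral_le[OF KgI has_integral_integrable[OF RI]] pw integral_unique[OF RI] by auto
  also have "\<dots> \<le> C * 1"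
  proof (intro mult_left_mono)
    have "\<beta> / \<beta>' \<le> 1" using bp by simp
    then have "(1/q) * (\<beta> / \<beta>') \<le> (1/q)" using q mult_left_mono[of "\<beta> / \<beta>'" 1 "1/q"] by simp
    then show "(1/q) * \<beta> / \<beta>' + (1 - 1/q) * \<kappa> / \<kappa> \<le> 1" using \<kappa> by simp
  qed (use C0 in auto)
  finally show ?thesis by (simp add: C_def)
qed

lemma pm:
  fixes K g B :: "real \<Rightarrow> real" and S :: "real set"
  assumes q: "1 \<le> q"
    and K0: "\<forall>x\<in>S. 0 \<le> K x" and g0: "\<forall>x\<in>S. 0 \<le> g x"
    and KgI: "(\<lambda>x. K x * g x) integrable_on S"
    and KI: "(K has_integral \<kappa>) S" and \<kappa>: "0 < \<kappa>"
    and BI: "(B has_integral \<beta>) S"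
    and bound: "\<forall>x\<in>S. K x * g x powr q \<le> B x"
  shows "integral S (\<lambda>x. K x * g x) \<le> \<kappa> powr (1 - 1/q) * \<beta> powr (1/q)"
proof -
  have "\<forall>x\<in>S. 0 \<le> B x" using bound K0 g0 by (meson mult_nonneg_nonneg order_trans powr_ge_zero)
  then have b0: "0 \<le> \<beta>" using has_integral_nonneg[OF BI] by blast
  show ?thesis
  proof (cases "\<beta> = 0")
    case False
    then have "0 < \<beta>" using b0 by simp
    from pm0[OF assms this order.refl] show ?thesis .
  next
    case True
    define X where "X = integral S (\<lambda>x. K x * g x)"
    define c where "c = \<kappa> powr (1 - 1/q)"
    have c0: "c > 0" using \<kappa> by (simp add: c_def)
    have "X \<le> 0"
    proof (rule ccontr)
      assume "\<not> X \<le> 0"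
      then have X0: "X > 0" by simp
      define b' where "b' = (X / (2*c)) powr q"
      have b'0: "b' > 0" using X0 c0 by (simp add: b'_def)
      have "b' powr (1/q) = X / (2*c)" using X0 c0 q by (simp add: b'_def powr_powr)
      moreover have "\<beta> \<le> b'" using True b'0 by simp
      note pm0[OF assms b'0 this]
      ultimately have "X \<le> c * (X / (2*c))"
        by (simp add: X_def c_def)
      also have "\<dots> = X/2" using c0 by simp
      finally show False using X0 by simp
    qed
    then show ?thesis using True q by (simp add: X_def)
  qed
qed

lemma cv:
  fixes \<phi> :: "real \<Rightarrow> real"
  assumes "(\<phi> has_integral I) {0..1}" "c \<noteq> 0"
    and "u = min (-d/c) ((1-d)/c)" "v = max (-d/c) ((1-d)/c)"
  shows "((\<lambda>x. \<phi> (c*x+d)) has_integral I / \<bar>c\<bar>) {u..v}"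
proof -
  have "((\<lambda>x. \<phi> (c *\<^sub>R x + d)) has_integral (1 / (\<bar>c\<bar> ^ DIM(real))) *\<^sub>R I)
     ((\<lambda>x. (1 / c) *\<^sub>R x + -((1 / c) *\<^sub>R d)) ` cbox 0 1)"
    using assms by (intro has_integral_affinity) auto
  moreover have "((\<lambda>x. (1 / c) *\<^sub>R x + -((1 / c) *\<^sub>R d)) ` cbox 0 1) = {u..v}"
  proof -
    have "(\<lambda>x. (1 / c) *\<^sub>R x + -((1 / c) *\<^sub>R d)) = (\<lambda>x. (1/c) * x + (-d/c))" by auto
    moreover have "(\<lambda>x. (1/c) * x + (-d/c)) ` {0..1} = {u..v}"
    proof -
    have e: "(1-d)/c = -d/c + 1/c" by (simp add: diff_divide_distrib)
    show ?thesis
    proof (cases "c > 0")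
      case True
      then have "u = -d/c" "v = (1-d)/c" using assms(3,4) e True by (auto simp: min_def max_def)
      then show ?thesis using True image_affinity_atLeastAtMost[of "1/c" "-d/c" 0 1] by (simp add: e)
    next
      case False
      then have c: "c < 0" using assms(2) by simp
      then have "u = (1-d)/c" "v = -d/c" using assms(3,4) e c by (auto simp: min_def max_def)
      then show ?thesis using c image_affinity_atLeastAtMost[of "1/c" "-d/c" 0 1] by (simp add: e)
    qed
    qed
    ultimately show ?thesis by simp
  qed
  ultimately show ?thesis by (simp add: divide_inverse_commute)
qed


lemma alg:
  fixes L J q :: real
  assumes "L > 0" "J \<ge> 0"
  shows "(L^3/12) powr (1-1/q) * ((L^3/8)*J) powr (1/q) = (L^3/8) * (2/3) powr (1-1/q) * J powr (1/q)"
proof -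
  have e: "L^3/12 = (L^3/8)*(2/3)" by simp
  have p: "L^3/8 > 0" using assms by simp
  have A: "(L^3/12) powr (1-1/q) = (L^3/8) powr (1-1/q) * (2/3) powr (1-1/q)"
    unfolding e using powr_mult[of "L^3/8" "2/3" "1-1/q"] p by simp
  have B: "((L^3/8)*J) powr (1/q) = (L^3/8) powr (1/q) * J powr (1/q)"
    using powr_mult[of "L^3/8" J "1/q"] p assms by simp
  have C: "(L^3/8) powr (1-1/q) * (L^3/8) powr (1/q) = L^3/8"
    using p by (simp add: powr_add[symmetric])
  have "(L^3/12) powr (1-1/q) * ((L^3/8)*J) powr (1/q)
      = ((L^3/8) powr (1-1/q) * (L^3/8) powr (1/q)) * (2/3) powr (1-1/q) * J powr (1/q)"
    unfolding A B by (simp only: mult_ac)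
  then show ?thesis unfolding C .
qed

theorem theorem8:
  fixes J I :: "real set" and h f f' f'' :: "real \<Rightarrow> real" and a b q :: real
  assumes J_int: "is_interval J" and J01: "{0<..<1} \<subseteq> J"
    and h_nonneg: "\<forall>t\<in>J. 0 \<le> h t" and h_nz: "\<exists>t\<in>J. h t \<noteq> 0"
    and h_int: "h absolutely_integrable_on {0<..<1}"
    and I_int: "is_interval I" and I_nonneg: "I \<subseteq> {0..}"
    and a_in: "a \<in> interior I" and b_in: "b \<in> interior I" and ab: "a < b"
    and f1: "\<forall>x\<in>interior I. (f has_real_derivative f' x) (at x)"
    and f2: "\<forall>x\<in>interior I. (f' has_real_derivative f'' x) (at x)"
    and f''_L1: "f'' absolutely_integrable_on {a..b}"
    and q: "1 \<le> q"
    and hconv: "h_convex h {a..b} (\<lambda>x. \<bar>f'' x\<bar> powr q)"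
  shows "\<bar>(f a + f b) / 2 - (1 / (b - a)) * integral {a..b} f\<bar>
    \<le> (b - a)^2 / 16 * (2/3) powr (1 - 1/q) *
      ( (integral {0..1} (\<lambda>t. ((1 - t^2) * \<bar>f'' a\<bar> powr q
            + t * (2 - t) * \<bar>f'' ((a + b) / 2)\<bar> powr q) * h t)) powr (1/q)
      + (integral {0..1} (\<lambda>t. ((1 - t^2) * \<bar>f'' b\<bar> powr q
            + t * (2 - t) * \<bar>f'' ((a + b) / 2)\<bar> powr q) * h t)) powr (1/q))"
proof -
  define L where "L = b - a"
  define m where "m = (a + b) / 2"
  define K where "K = (\<lambda>x::real. (x - a) * (b - x))"
  define Ma where "Ma = \<bar>f'' a\<bar> powr q"
  define Mb where "Mb = \<bar>f'' b\<bar> powr q"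
  define Mm where "Mm = \<bar>f'' m\<bar> powr q"
  define \<phi>1 where "\<phi>1 = (\<lambda>t::real. t * (2 - t) * h t)"
  define \<phi>2 where "\<phi>2 = (\<lambda>t::real. (1 - t^2) * h t)"
  define Ja where "Ja = integral {0..1} (\<lambda>t. ((1 - t^2) * Ma + t * (2 - t) * Mm) * h t)"
  define Jb where "Jb = integral {0..1} (\<lambda>t. ((1 - t^2) * Mb + t * (2 - t) * Mm) * h t)"
  have L0: "L > 0" using ab by (simp add: L_def)
  have am: "a < m" "m < b" using ab by (auto simp: m_def)
  have iI: "is_interval (interior I)"
    using I_int by (simp add: is_interval_convex_1)
  have sub: "{a..b} \<subseteq> interior I"
    using mem_is_interval_1_I[OF iI a_in b_in] by auto
  have d1: "\<And>x. x \<in> {a..b} \<Longrightarrow> (f has_real_derivative f' x) (at x)"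
    using f1 sub by auto
  have d2: "\<And>x. x \<in> {a..b} \<Longrightarrow> (f' has_real_derivative f'' x) (at x)"
    using f2 sub by auto
  have fcont: "continuous_on {a..b} f"
    using d1 by (meson DERIV_isCont continuous_at_imp_continuous_on)
  have fint: "f integrable_on {a..b}" using fcont by (rule integrable_continuous_interval)
  define P where "P = (\<lambda>x. K x * f' x - (a + b - 2*x) * f x)"
  have PD: "(P has_real_derivative K x * f'' x + 2 * f x) (at x)" if x: "x \<in> {a..b}" for x
  proof -
    note dx1 = d1[OF x] and dx2 = d2[OF x]
    show ?thesis unfolding P_def K_def
      by (auto intro!: derivative_eq_intros dx1 dx2 simp: algebra_simps)
  qed
  have FTC: "((\<lambda>x. K x * f'' x + 2 * f x) has_integral (P b - P a)) {a..b}"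
    apply (rule fundamental_theorem_of_calculus)
    using ab apply simp
    using PD by (simp add: has_real_derivative_iff_has_vector_derivative[symmetric] has_field_derivative_at_within)
  have PbPa: "P b - P a = L * (f a + f b)" by (simp add: P_def K_def L_def algebra_simps)
  have "((\<lambda>x. (K x * f'' x + 2 * f x) - 2 * f x) has_integral (P b - P a) - 2 * integral {a..b} f) {a..b}"
    by (intro has_integral_diff FTC has_integral_mult_right integrable_integral fint)
  then have intid: "integral {a..b} (\<lambda>x. K x * f'' x) = L * (f a + f b) - 2 * integral {a..b} f"
    using PbPa by (simp add: integral_unique)
  have LHS: "(f a + f b) / 2 - (1 / (b - a)) * integral {a..b} f = integral {a..b} (\<lambda>x. K x * f'' x) / (2*L)"
    using L0 by (simp add: intid L_def field_simps)
  have Kcont: "continuous_on S K" for S unfolding K_def by (intro continuous_intros)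
  have KfA: "(\<lambda>x. K x * f'' x) absolutely_integrable_on {a..b}"
  proof (rule absolutely_integrable_bounded_measurable_product_real[OF _ _ _ f''_L1])
    show "K \<in> borel_measurable (lebesgue_on {a..b})"
      by (rule continuous_imp_measurable_on_sets_lebesgue[OF Kcont]) auto
    show "{a..b} \<in> sets lebesgue" by auto
    show "bounded (K ` {a..b})"
      by (intro compact_imp_bounded compact_continuous_image Kcont compact_Icc)
  qed
  have K0: "\<And>x. x \<in> {a..b} \<Longrightarrow> 0 \<le> K x" by (auto simp: K_def)
  have absI: "(\<lambda>x. K x * \<bar>f'' x\<bar>) integrable_on {a..b}"
  proof (rule integrable_eq)
    show "(\<lambda>x. norm (K x * f'' x)) integrable_on {a..b}"
      using KfA by (simp add: absolutely_integrable_on_def)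
    show "norm (K x * f'' x) = K x * \<bar>f'' x\<bar>" if "x \<in> {a..b}" for x
      using K0[OF that] by (simp add: abs_mult)
  qed
  have step1: "\<bar>integral {a..b} (\<lambda>x. K x * f'' x)\<bar> \<le> integral {a..b} (\<lambda>x. K x * \<bar>f'' x\<bar>)"
    using integral_norm_bound_integral[OF set_lebesgue_integral_eq_integral(1)[OF KfA] absI] K0
    by (simp add: abs_mult)
  have split: "integral {a..b} (\<lambda>x. K x * \<bar>f'' x\<bar>)
      = integral {a<..<m} (\<lambda>x. K x * \<bar>f'' x\<bar>) + integral {m<..<b} (\<lambda>x. K x * \<bar>f'' x\<bar>)"
    using Henstock_Kurzweil_Integration.integral_combine[OF less_imp_le[OF am(1)] less_imp_le[OF am(2)] absI]
    by (simp add: integral_open_interval_real)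
  have absIa: "(\<lambda>x. K x * \<bar>f'' x\<bar>) integrable_on {a<..<m}"
    using integrable_on_subinterval[OF absI, of a m] am
    by (simp add: integrable_on_open_interval_real)
  have absIb: "(\<lambda>x. K x * \<bar>f'' x\<bar>) integrable_on {m<..<b}"
    using integrable_on_subinterval[OF absI, of m b] am
    by (simp add: integrable_on_open_interval_real)
  have phiI: "(\<lambda>t. w t * h t) integrable_on {0..1}" if wc: "continuous_on UNIV w" for w
  proof -
    have "(\<lambda>t. w t * h t) absolutely_integrable_on {0<..<1}"
    proof (rule absolutely_integrable_bounded_measurable_product_real[OF _ _ _ h_int])
      show "w \<in> borel_measurable (lebesgue_on {0<..<1})"
        by (rule continuous_imp_measurable_on_sets_lebesgue[OF continuous_on_subset[OF wc]]) auto
      show "{0<..<1::real} \<in> sets lebesgue" by auto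
      have "bounded (w ` {0..1})"
        by (intro compact_imp_bounded compact_continuous_image continuous_on_subset[OF wc] compact_Icc) auto
      then show "bounded (w ` {0<..<1})" by (rule bounded_subset) auto
    qed
    then have "(\<lambda>t. w t * h t) integrable_on {0<..<1}"
      by (simp add: absolutely_integrable_on_def)
    then show ?thesis by (simp add: integrable_on_open_interval_real)
  qed
  have I1: "\<phi>1 integrable_on {0..1}" unfolding \<phi>1_def by (rule phiI) (intro continuous_intros)
  have I2: "\<phi>2 integrable_on {0..1}" unfolding \<phi>2_def by (rule phiI) (intro continuous_intros)
  have hpos: "\<And>t. t \<in> {0<..<1} \<Longrightarrow> 0 \<le> h t" using J01 h_nonneg by auto
  have I1n: "0 \<le> integral {0..1} \<phi>1"
    unfolding integral_open_interval_real
    by (rule integral_nonneg) (use I1 hpos in \<open>auto simp: integrable_on_open_interval_real \<phi>1_def\<close>)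
  have I2n: "0 \<le> integral {0..1} \<phi>2"
  proof -
    have "0 \<le> 1 - t^2" if "t \<in> {0<..<1}" for t :: real
      using that by (simp add: abs_square_le_1)
    then show ?thesis
    unfolding integral_open_interval_real
    by (intro integral_nonneg) (use I2 hpos in \<open>auto simp: integrable_on_open_interval_real \<phi>2_def\<close>)
  qed
  have Jform: "integral {0..1} (\<lambda>t. ((1 - t^2) * M1 + t * (2 - t) * M2) * h t)
       = M1 * integral {0..1} \<phi>2 + M2 * integral {0..1} \<phi>1" for M1 M2
  proof -
    have "(\<lambda>t. ((1 - t^2) * M1 + t * (2 - t) * M2) * h t) = (\<lambda>t. M1 * \<phi>2 t + M2 * \<phi>1 t)"
      by (auto simp: \<phi>1_def \<phi>2_def algebra_simps)
    moreover have "((\<lambda>t. M1 * \<phi>2 t + M2 * \<phi>1 t) has_integral M1 * integral {0..1} \<phi>2 + M2 * integral {0..1} \<phi>1) {0..1}"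
      by (intro has_integral_add has_integral_mult_right integrable_integral I1 I2)
    ultimately show ?thesis by (simp add: integral_unique)
  qed
  have Ma0: "0 \<le> Ma" and Mb0: "0 \<le> Mb" and Mm0: "0 \<le> Mm" by (auto simp: Ma_def Mb_def Mm_def)
  have Ja0: "0 \<le> Ja" unfolding Ja_def Jform using Ma0 Mm0 I1n I2n by simp
  have Jb0: "0 \<le> Jb" unfolding Jb_def Jform using Mb0 Mm0 I1n I2n by simp
  define G where "G = (\<lambda>x. (a+b)*x^2/2 - a*b*x - x^3/3)"
  have GD: "(G has_vector_derivative K x) (at x within S)" for x S
  proof -
    have "(G has_real_derivative K x) (at x within S)"
      unfolding G_def K_def by (auto intro!: derivative_eq_intros simp: algebra_simps power2_eq_square)
    then show ?thesis by (simp add: has_real_derivative_iff_has_vector_derivative)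
  qed
  have KIb: "(K has_integral L^3/12) {m<..<b}"
  proof -
    have "(K has_integral G b - G m) {m..b}"
      using am by (intro fundamental_theorem_of_calculus GD) auto
    moreover have "G b - G m = L^3/12"
      by (simp add: G_def m_def L_def field_simps power2_eq_square power3_eq_cube)
    ultimately show ?thesis by (simp add: has_integral_Icc_iff_Ioo)
  qed
  have KIa: "(K has_integral L^3/12) {a<..<m}"
  proof -
    have "(K has_integral G m - G a) {a..m}"
      using am by (intro fundamental_theorem_of_calculus GD) auto
    moreover have "G m - G a = L^3/12"
      by (simp add: G_def m_def L_def field_simps power2_eq_square power3_eq_cube)
    ultimately show ?thesis by (simp add: has_integral_Icc_iff_Ioo)
  qed
  have abs2: "\<bar>-2/L\<bar> = 2/L" "\<bar>2/L\<bar> = 2/L" using L0 by auto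
  have hc: "\<And>x y t. x \<in> {a..b} \<Longrightarrow> y \<in> {a..b} \<Longrightarrow> t \<in> {0<..<1} \<Longrightarrow>
      \<bar>f'' (t * x + (1 - t) * y)\<bar> powr q \<le> h t * \<bar>f'' x\<bar> powr q + h (1 - t) * \<bar>f'' y\<bar> powr q"
    using hconv unfolding h_convex_def by blast
  have bL: "b = a + L" and mLa: "m = a + L/2" by (simp_all add: L_def m_def field_simps)
  have aL: "a = b - L" and mL: "m = b - L/2" by (simp_all add: L_def m_def field_simps)
  have mab: "m \<in> {a..b}" "a \<in> {a..b}" "b \<in> {a..b}" using am by auto
  have g0: "\<forall>x\<in>S. 0 \<le> \<bar>f'' x\<bar>" for S by auto
  have hb: "integral {m<..<b} (\<lambda>x. K x * \<bar>f'' x\<bar>) \<le> (L^3/12) powr (1-1/q) * ((L^3/8) * Jb) powr (1/q)"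
  proof -
    define Bb where "Bb = (\<lambda>x. (L^2/4) * (Mm * \<phi>1 ((-2/L) * x + 2*b/L) + Mb * \<phi>2 ((2/L) * x + (-2*m/L))))"
    have e1: "- (2*b/L) / (-2/L) = b" "(1 - 2*b/L) / (-2/L) = m"
      using L0 by (simp_all add: field_simps m_def L_def)
    have e2: "- (-2*m/L) / (2/L) = m" "(1 - -2*m/L) / (2/L) = b"
      using L0 by (simp_all add: field_simps m_def L_def)
    have c1: "((\<lambda>x. \<phi>1 ((-2/L) * x + 2*b/L)) has_integral integral {0..1} \<phi>1 / \<bar>-2/L\<bar>) {m..b}"
      using cv[where c="-2/L" and d="2*b/L", OF integrable_integral[OF I1] _ refl refl] L0
      unfolding e1 min_absorb2[OF less_imp_le[OF am(2)]] max_absorb1[OF less_imp_le[OF am(2)]] by simp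
    have c2: "((\<lambda>x. \<phi>2 ((2/L) * x + (-2*m/L))) has_integral integral {0..1} \<phi>2 / \<bar>2/L\<bar>) {m..b}"
      using cv[where c="2/L" and d="-2*m/L", OF integrable_integral[OF I2] _ refl refl] L0
      unfolding e2 min_absorb1[OF less_imp_le[OF am(2)]] max_absorb2[OF less_imp_le[OF am(2)]] by simp
    have BIc: "(Bb has_integral (L^2/4) * (Mm * (integral {0..1} \<phi>1 / \<bar>-2/L\<bar>) + Mb * (integral {0..1} \<phi>2 / \<bar>2/L\<bar>))) {m..b}"
      unfolding Bb_def by (intro has_integral_mult_right has_integral_add c1 c2)
    have eqv: "(L^2/4) * (Mm * (integral {0..1} \<phi>1 / \<bar>-2/L\<bar>) + Mb * (integral {0..1} \<phi>2 / \<bar>2/L\<bar>)) = (L^3/8) * Jb"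
      unfolding Jb_def Jform abs2 using L0 by (simp add: field_simps power2_eq_square power3_eq_cube)
    have BI: "(Bb has_integral (L^3/8) * Jb) {m<..<b}"
      using has_integral_Icc_iff_Ioo[THEN iffD1, OF BIc[unfolded eqv]] .
    have bound: "\<forall>x\<in>{m<..<b}. K x * \<bar>f'' x\<bar> powr q \<le> Bb x"
    proof
      fix x assume x: "x \<in> {m<..<b}"
      define s where "s = (-2/L) * x + 2*b/L"
      have se: "s = 2*(b-x)/L" using L0 by (simp add: s_def field_simps)
      have "2*(b-x) < L" using x by (auto simp: m_def L_def)
      then have s01: "s \<in> {0<..<1}" unfolding se using x L0 by auto
      have pt: "s * m + (1 - s) * b = x" unfolding mL s_def using L0 by (simp add: field_simps)
      have t1: "(2/L) * x + (-2*m/L) = 1 - s" unfolding mL s_def using L0 by (simp add: field_simps)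
      have Kx: "K x = (L^2/4) * (s * (2 - s))" "K x = (L^2/4) * (1 - (1 - s)^2)"
        unfolding K_def aL s_def using L0 by (simp_all add: field_simps power2_eq_square)
      have Kx0: "0 \<le> K x" using x am by (auto simp: K_def)
      have "K x * \<bar>f'' x\<bar> powr q \<le> K x * (h s * Mm + h (1 - s) * Mb)"
        using hc[OF mab(1) mab(3) s01] pt Kx0 by (simp add: Mm_def Mb_def mult_left_mono)
      also have "\<dots> = K x * h s * Mm + K x * h (1 - s) * Mb" by (simp add: algebra_simps)
      also have "K x * h s * Mm = (L^2/4) * (s * (2 - s)) * h s * Mm" by (simp only: Kx(1))
      also have "K x * h (1 - s) * Mb = (L^2/4) * (1 - (1 - s)^2) * h (1 - s) * Mb" by (simp only: Kx(2))
      also have "(L^2/4) * (s * (2 - s)) * h s * Mm + (L^2/4) * (1 - (1 - s)^2) * h (1 - s) * Mb = Bb x"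
        unfolding Bb_def s_def[symmetric] t1 \<phi>1_def \<phi>2_def by (simp add: field_simps power2_eq_square)
      finally show "K x * \<bar>f'' x\<bar> powr q \<le> Bb x" .
    qed
    show ?thesis
      by (rule pm[OF q _ g0 absIb KIb _ BI bound]) (use am L0 in \<open>auto simp: K_def\<close>)
  qed
  have ha: "integral {a<..<m} (\<lambda>x. K x * \<bar>f'' x\<bar>) \<le> (L^3/12) powr (1-1/q) * ((L^3/8) * Ja) powr (1/q)"
  proof -
    define Ba where "Ba = (\<lambda>x. (L^2/4) * (Mm * \<phi>1 ((2/L) * x + (-2*a/L)) + Ma * \<phi>2 ((-2/L) * x + 2*m/L)))"
    have e1: "- (-2*a/L) / (2/L) = a" "(1 - -2*a/L) / (2/L) = m"
      using L0 by (simp_all add: field_simps m_def L_def)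
    have e2: "- (2*m/L) / (-2/L) = m" "(1 - 2*m/L) / (-2/L) = a"
      using L0 by (simp_all add: field_simps m_def L_def)
    have c1: "((\<lambda>x. \<phi>1 ((2/L) * x + (-2*a/L))) has_integral integral {0..1} \<phi>1 / \<bar>2/L\<bar>) {a..m}"
      using cv[where c="2/L" and d="-2*a/L", OF integrable_integral[OF I1] _ refl refl] L0
      unfolding e1 min_absorb1[OF less_imp_le[OF am(1)]] max_absorb2[OF less_imp_le[OF am(1)]] by simp
    have c2: "((\<lambda>x. \<phi>2 ((-2/L) * x + 2*m/L)) has_integral integral {0..1} \<phi>2 / \<bar>-2/L\<bar>) {a..m}"
      using cv[where c="-2/L" and d="2*m/L", OF integrable_integral[OF I2] _ refl refl] L0
      unfolding e2 min_absorb2[OF less_imp_le[OF am(1)]] max_absorb1[OF less_imp_le[OF am(1)]] by simp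
    have BIc: "(Ba has_integral (L^2/4) * (Mm * (integral {0..1} \<phi>1 / \<bar>2/L\<bar>) + Ma * (integral {0..1} \<phi>2 / \<bar>-2/L\<bar>))) {a..m}"
      unfolding Ba_def by (intro has_integral_mult_right has_integral_add c1 c2)
    have eqv: "(L^2/4) * (Mm * (integral {0..1} \<phi>1 / \<bar>2/L\<bar>) + Ma * (integral {0..1} \<phi>2 / \<bar>-2/L\<bar>)) = (L^3/8) * Ja"
      unfolding Ja_def Jform abs2 using L0 by (simp add: field_simps power2_eq_square power3_eq_cube)
    have BI: "(Ba has_integral (L^3/8) * Ja) {a<..<m}"
      using has_integral_Icc_iff_Ioo[THEN iffD1, OF BIc[unfolded eqv]] .
    have bound: "\<forall>x\<in>{a<..<m}. K x * \<bar>f'' x\<bar> powr q \<le> Ba x"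
    proof
      fix x assume x: "x \<in> {a<..<m}"
      define s where "s = (2/L) * x + (-2*a/L)"
      have se: "s = 2*(x-a)/L" using L0 by (simp add: s_def field_simps)
      have "2*(x-a) < L" using x by (auto simp: m_def L_def)
      then have s01: "s \<in> {0<..<1}" unfolding se using x L0 by auto
      have pt: "s * m + (1 - s) * a = x" unfolding mLa s_def using L0 by (simp add: field_simps)
      have t1: "(-2/L) * x + 2*m/L = 1 - s" unfolding mLa s_def using L0 by (simp add: field_simps)
      have Kx: "K x = (L^2/4) * (s * (2 - s))" "K x = (L^2/4) * (1 - (1 - s)^2)"
        unfolding K_def bL s_def using L0 by (simp_all add: field_simps power2_eq_square)
      have Kx0: "0 \<le> K x" using x am by (auto simp: K_def)
      have "K x * \<bar>f'' x\<bar> powr q \<le> K x * (h s * Mm + h (1 - s) * Ma)"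
        using hc[OF mab(1) mab(2) s01] pt Kx0 by (simp add: Mm_def Ma_def mult_left_mono)
      also have "\<dots> = K x * h s * Mm + K x * h (1 - s) * Ma" by (simp add: algebra_simps)
      also have "K x * h s * Mm = (L^2/4) * (s * (2 - s)) * h s * Mm" by (simp only: Kx(1))
      also have "K x * h (1 - s) * Ma = (L^2/4) * (1 - (1 - s)^2) * h (1 - s) * Ma" by (simp only: Kx(2))
      also have "(L^2/4) * (s * (2 - s)) * h s * Mm + (L^2/4) * (1 - (1 - s)^2) * h (1 - s) * Ma = Ba x"
        unfolding Ba_def s_def[symmetric] t1 \<phi>1_def \<phi>2_def by (simp add: field_simps power2_eq_square)
      finally show "K x * \<bar>f'' x\<bar> powr q \<le> Ba x" .
    qed
    show ?thesis
      by (rule pm[OF q _ g0 absIa KIa _ BI bound]) (use am L0 in \<open>auto simp: K_def\<close>)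
  qed
  have Jaf: "integral {0..1} (\<lambda>t. ((1 - t^2) * \<bar>f'' a\<bar> powr q
            + t * (2 - t) * \<bar>f'' ((a + b) / 2)\<bar> powr q) * h t) = Ja"
    by (simp add: Ja_def Ma_def Mm_def m_def)
  have Jbf: "integral {0..1} (\<lambda>t. ((1 - t^2) * \<bar>f'' b\<bar> powr q
            + t * (2 - t) * \<bar>f'' ((a + b) / 2)\<bar> powr q) * h t) = Jb"
    by (simp add: Jb_def Mb_def Mm_def m_def)
  have "\<bar>(f a + f b) / 2 - (1 / L) * integral {a..b} f\<bar> = \<bar>integral {a..b} (\<lambda>x. K x * f'' x)\<bar> / (2*L)"
    using LHS L0 by (simp add: L_def)
  also have "\<dots> \<le> (integral {a<..<m} (\<lambda>x. K x * \<bar>f'' x\<bar>) + integral {m<..<b} (\<lambda>x. K x * \<bar>f'' x\<bar>)) / (2*L)"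
    using step1 split L0 by (simp add: divide_right_mono)
  also have "\<dots> \<le> ((L^3/12) powr (1-1/q) * ((L^3/8) * Ja) powr (1/q) + (L^3/12) powr (1-1/q) * ((L^3/8) * Jb) powr (1/q)) / (2*L)"
    using ha hb L0 by (intro divide_right_mono add_mono) auto
  also have "\<dots> = ((L^3/8) * (2/3) powr (1-1/q) * Ja powr (1/q) + (L^3/8) * (2/3) powr (1-1/q) * Jb powr (1/q)) / (2*L)"
    unfolding alg[OF L0 Ja0] alg[OF L0 Jb0] ..
  also have "\<dots> = L^2/16 * (2/3) powr (1-1/q) * (Ja powr (1/q) + Jb powr (1/q))"
    using L0 by (simp add: field_simps power2_eq_square power3_eq_cube)
  finally show ?thesis unfolding Jaf Jbf L_def[symmetric] .
qed

end
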